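(* Let $f\in\mathbb{F}[Y,Z]$ and let $g\in\mathbb{F}[Y]$ or $g\in\mathbb{F}[Z]$. Then $\mathrm{maxrank}(M_{fg})\le\mathrm{maxrank}(M_f)$.
   Context: $\mathbb{F}$ is a field, $Y=\{y_1,\dots,y_m\}$ and $Z=\{z_1,\dots,z_m\}$ are disjoint sets of variables. For $f\in\mathbb{F}[Y,Z]$, the polynomial coefficient matrix $M_f$ is the $2^m\times 2^m$ matrix with entries in $\mathbb{F}[Y,Z]$, rows indexed by monic multilinear monomials $p$ in $Y$ and columns by monic multilinear monomials $q$ in $Z$, where $M_f(p,q)=G$ if and only if $f$ can be uniquely written as $f=pq\,G+Q$ with $G$ containing no variable other than those present in $p$ and $q$, and $Q$ having no monomial which is divisible by $pq$ and contains only variables present in $p$ and $q$. For $S:Y\cup Z\to\mathbb{F}$, $M_f|_S$ is obtained by evaluating each entry at $S$, and $\mathrm{maxrank}(M_f)=\max_S\mathrm{rank}(M_f|_S)$. *)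

theory Defs
  imports "HOL-Library.Poly_Mapping" "Jordan_Normal_Form.DL_Rank"
begin

text \<open>Variables: Inl i stands for y_(i+1), Inr i for z_(i+1); only indices i < m are used.\<close>

type_synonym var = "nat + nat"
type_synonym mon = "var \<Rightarrow>\<^sub>0 nat"
type_synonym 'a mpoly = "mon \<Rightarrow>\<^sub>0 'a"

definition Yvars :: "nat \<Rightarrow> var set" where "Yvars m = Inl ` {..<m}"
definition Zvars :: "nat \<Rightarrow> var set" where "Zvars m = Inr ` {..<m}"

definition vars :: "'a::zero mpoly \<Rightarrow> var set" where
  "vars f = (\<Union>\<mu>\<in>Poly_Mapping.keys f. Poly_Mapping.keys \<mu>)"

definition mdvd :: "mon \<Rightarrow> mon \<Rightarrow> bool" where
  "mdvd a b \<longleftrightarrow> (\<forall>v. Poly_Mapping.lookup a v \<le> Poly_Mapping.lookup b v)"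

definition mlmon :: "var set \<Rightarrow> mon" where
  "mlmon V = (\<Sum>v\<in>V. Poly_Mapping.single v 1)"

definition monpoly :: "mon \<Rightarrow> 'a::{zero,one} mpoly" where
  "monpoly \<mu> = Poly_Mapping.single \<mu> 1"

text \<open>Entry M_f(p,q), for p = product of y_i (i in P), q = product of z_j (j in Q):
  the unique G with f = pq G + R, G only in variables of p,q, and R having no monomial
  divisible by pq containing only variables of p,q.\<close>
definition pcm_entry :: "'a::comm_ring_1 mpoly \<Rightarrow> nat set \<Rightarrow> nat set \<Rightarrow> 'a mpoly" where
  "pcm_entry f P Q =
     (let V = Inl ` P \<union> Inr ` Q; pq = mlmon V in
      THE G. vars G \<subseteq> V \<and>
        (\<exists>R. f = monpoly pq * G + R \<and>
             (\<forall>\<mu>\<in>Poly_Mapping.keys R. \<not> (mdvd pq \<mu> \<and> Poly_Mapping.keys \<mu> \<subseteq> V))))"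

definition eval :: "(var \<Rightarrow> 'a::comm_ring_1) \<Rightarrow> 'a mpoly \<Rightarrow> 'a" where
  "eval S f = (\<Sum>\<mu>\<in>Poly_Mapping.keys f. Poly_Mapping.lookup f \<mu> * (\<Prod>v\<in>Poly_Mapping.keys \<mu>. S v ^ Poly_Mapping.lookup \<mu> v))"

text \<open>Index i < 2^m encodes the subset {j < m. bit i j} of {0..<m}; this is a bijection
  between {0..<2^m} and the subsets of {0..<m} (monic multilinear monomials).\<close>
definition idx_set :: "nat \<Rightarrow> nat \<Rightarrow> nat set" where
  "idx_set m i = {j. j < m \<and> bit i j}"

definition pcm_eval :: "nat \<Rightarrow> 'a::field mpoly \<Rightarrow> (var \<Rightarrow> 'a) \<Rightarrow> 'a mat" where
  "pcm_eval m f S = mat (2^m) (2^m)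
     (\<lambda>(i, j). eval S (pcm_entry f (idx_set m i) (idx_set m j)))"

definition maxrank :: "nat \<Rightarrow> 'a::field mpoly \<Rightarrow> nat" where
  "maxrank m f = Max ((\<lambda>S. vec_space.rank (2^m) (pcm_eval m f S)) ` UNIV)"

end

theory Submission
  imports Defs
begin


context vec_space begin

lemma rank_mult_le_left:
  assumes A: "A \<in> carrier_mat n na" and B: "B \<in> carrier_mat na nc"
  shows "rank (A * B) \<le> rank A"
proof -
  have AB: "A * B \<in> carrier_mat n nc" using A B by auto
  define W where "W = span (set (cols A))"
  have colsA: "set (cols A) \<subseteq> carrier_vec n" using A cols_dim by blast
  have colsAB: "set (cols (A*B)) \<subseteq> carrier_vec n" using AB cols_dim by blast
  have "set (cols (A * B)) \<subseteq> W"
  proof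
    fix x assume "x \<in> set (cols (A * B))"
    then have "x \<in> col_space (A*B)" unfolding col_space_def using in_own_span colsAB by blast
    then obtain y where y: "y \<in> carrier_vec nc" "x = (A*B) *\<^sub>v y"
      unfolding col_space_eq[OF AB] using AB by auto
    have "x = A *\<^sub>v (B *\<^sub>v y)" using y A B by (simp add: assoc_mult_mat_vec)
    moreover have "B *\<^sub>v y \<in> carrier_vec (dim_col A)" using mult_mat_vec_carrier[OF B y(1)] A by auto
    ultimately have "x \<in> col_space A" unfolding col_space_eq[OF A] using A by auto
    then show "x \<in> W" unfolding W_def col_space_def .
  qed
  have sW: "subspace class_ring W V" unfolding W_def using span_is_subspace colsA by auto
  then have "span (set (cols (A * B))) \<subseteq> W"
    by (simp add: \<open>set (cols (A * B)) \<subseteq> W\<close> span_is_subset)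
  have "subspace class_ring (span (set (cols (A * B)))) V" using span_is_subspace colsAB by auto
  have subspace:"subspace class_ring (span (set (cols (A * B)))) (vs W)"
    using nested_subspaces[OF sW \<open>subspace class_ring (span (set (cols (A * B)))) V\<close>
    \<open>span (set (cols (A * B))) \<subseteq> W\<close>] .
  have fin_dim: "vectorspace.fin_dim class_ring (vs W)" unfolding W_def
    using fin_dim_span_cols A by auto
  have "vectorspace.fin_dim class_ring (span_vs (set (cols (A * B))))" using AB fin_dim_span_cols by blast
  then show "rank (A * B) \<le> rank A" unfolding rank_def
    using vectorspace.subspace_dim[OF subspace_is_vs[OF sW] subspace fin_dim] W_def by auto
qed

lemma rank_mult_le_right:
  assumes A: "A \<in> carrier_mat n n" and B: "B \<in> carrier_mat n nc"
  shows "rank (A * B) \<le> rank B"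
proof -
  have AB: "A * B \<in> carrier_mat n nc" using A B by auto
  obtain S where S: "maximal S (\<lambda>T. T \<subseteq> set (cols (A*B)) \<and> lin_indpt T)"
    using maximal_exists[of "(\<lambda>T. T \<subseteq> set (cols (A*B)) \<and> lin_indpt T)" "card (set (cols (A*B)))" "{}"]
    by (meson List.finite_set card_mono empty_iff empty_subsetI finite_lin_indpt2 rev_finite_subset)
  have r: "rank (A*B) = card S" using rank_card_indpt[OF AB S] .
  have Ssub: "S \<subseteq> set (cols (A*B))" and Sli: "lin_indpt S" using S unfolding maximal_def by auto
  have finS: "finite S" using Ssub finite_subset by blast
  have colsB: "set (cols B) \<subseteq> carrier_vec n" using B cols_dim by blast
  have colsAB: "set (cols (A*B)) \<subseteq> carrier_vec n" using AB cols_dim by blast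
  have "\<forall>s\<in>S. \<exists>u. u \<in> set (cols B) \<and> A *\<^sub>v u = s"
  proof
    fix s assume "s \<in> S"
    then have "s \<in> set (cols (A*B))" using Ssub by auto
    then obtain j where j: "j < nc" "s = col (A*B) j" using AB
      by (metis carrier_matD(2) cols_length cols_nth in_set_conv_nth)
    have "s = A *\<^sub>v col B j" using j col_mult2[OF A B] by auto
    moreover have "col B j \<in> set (cols B)" using j B
      by (metis carrier_matD(2) cols_length cols_nth nth_mem)
    ultimately show "\<exists>u. u \<in> set (cols B) \<and> A *\<^sub>v u = s" by auto
  qed
  then obtain c where c: "\<And>s. s \<in> S \<Longrightarrow> c s \<in> set (cols B) \<and> A *\<^sub>v c s = s" by metis
  have inj: "inj_on c S" by (metis c inj_onI)
  define U where "U = c ` S"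
  have Usub: "U \<subseteq> set (cols B)" using c U_def by auto
  have cardU: "card U = card S" using inj U_def card_image by blast
  have finU: "finite U" using finS U_def by auto
  have "lin_indpt U"
  proof
    assume ld: "lin_dep U"
    obtain a v where a: "a \<in> U \<rightarrow> carrier class_ring" "lincomb a U = \<zero>\<^bsub>V\<^esub>" "v \<in> U" "a v \<noteq> \<zero>\<^bsub>class_ring\<^esub>"
      using finite_lin_dep[OF finU ld] Usub colsB by auto
    have eq: "lincomb (\<lambda>s. a (c s)) S = A *\<^sub>v lincomb a U"
    proof (rule eq_vecI)
      have dl: "dim_vec (lincomb a U) = n" using lincomb_dim finU Usub colsB by blast
      show "dim_vec (lincomb (\<lambda>s. a (c s)) S) = dim_vec (A *\<^sub>v lincomb a U)"
        using lincomb_dim[OF finS] Ssub colsAB A by auto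
      fix i assume "i < dim_vec (A *\<^sub>v lincomb a U)"
      then have i: "i < n" using A by auto
      have "lincomb (\<lambda>s. a (c s)) S $ i = (\<Sum>s\<in>S. a (c s) * s $ i)"
        using lincomb_index[OF i] Ssub colsAB by blast
      also have "\<dots> = (\<Sum>s\<in>S. a (c s) * (A *\<^sub>v c s) $ i)" using c by auto
      also have "\<dots> = (\<Sum>u\<in>U. a u * (A *\<^sub>v u) $ i)" unfolding U_def
        using sum.reindex[OF inj, of "\<lambda>u. a u * (A *\<^sub>v u) $ i"] by (simp add: comp_def)
      also have "\<dots> = (\<Sum>u\<in>U. a u * (\<Sum>l<n. A $$ (i,l) * u $ l))"
        using i A Usub colsB by (intro sum.cong) (auto simp: scalar_prod_def lessThan_atLeast0)
      also have "\<dots> = (\<Sum>l<n. A $$ (i,l) * (\<Sum>u\<in>U. a u * u $ l))"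
        by (simp add: sum_distrib_left sum_distrib_right mult_ac sum.swap[of _ U])
      also have "\<dots> = (\<Sum>l<n. A $$ (i,l) * lincomb a U $ l)"
        using lincomb_index Usub colsB by (intro sum.cong) auto
      also have "\<dots> = (A *\<^sub>v lincomb a U) $ i"
        using i A dl by (auto simp: scalar_prod_def lessThan_atLeast0)
      finally show "lincomb (\<lambda>s. a (c s)) S $ i = (A *\<^sub>v lincomb a U) $ i" .
    qed
    have "lincomb (\<lambda>s. a (c s)) S = \<zero>\<^bsub>V\<^esub>" using eq a(2) A by auto
    moreover obtain s0 where "s0 \<in> S" "c s0 = v" using a(3) U_def by auto
    ultimately have "lin_dep S"
      using lin_dep_crit[OF finS subset_refl, where a="\<lambda>s. a (c s)" and v=s0] a(4) by auto
    then show False using Sli by auto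
  qed
  then have "card U \<le> rank B" using rank_ge_card_indpt[OF B Usub] by auto
  then show ?thesis using r cardU by auto
qed

end


abbreviation lk where "lk \<equiv> Poly_Mapping.lookup"
abbreviation ks where "ks \<equiv> Poly_Mapping.keys"
abbreviation sg where "sg \<equiv> Poly_Mapping.single"

lemma lookup_mlmon: "finite V \<Longrightarrow> lk (mlmon V) v = (if v \<in> V then 1 else 0)"
  unfolding mlmon_def by (simp add: lookup_sum lookup_single when_def)

lemma keys_mlmon: "finite V \<Longrightarrow> ks (mlmon V) = V"
  by (auto simp: in_keys_iff lookup_mlmon split: if_splits)

lemma keys_add_nat: "ks ((a::'b \<Rightarrow>\<^sub>0 nat) + b) = ks a \<union> ks b"
  by (auto simp: in_keys_iff lookup_add)

lemma mlmon_union: "finite W1 \<Longrightarrow> finite W2 \<Longrightarrow>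
  mlmon W1 + mlmon W2 = mlmon (W1 \<union> W2) + mlmon (W1 \<inter> W2)"
  by (rule poly_mapping_eqI) (auto simp: lookup_add lookup_mlmon)

lemma poly_sum: "f = (\<Sum>\<mu>\<in>ks f. sg \<mu> (lk f \<mu>))"
proof (rule poly_mapping_eqI)
  fix k
  show "lk f k = lk (\<Sum>\<mu>\<in>ks f. sg \<mu> (lk f \<mu>)) k"
    by (cases "k \<in> ks f") (auto simp: lookup_sum lookup_single when_def in_keys_iff)
qed

lemma lookup_single_mult_add:
  "lk (sg (p::'b \<Rightarrow>\<^sub>0 nat) c * X) (p + \<nu>) = c * lk X \<nu>"
proof -
  have "sg p c * X = (\<Sum>\<nu>\<in>ks X. sg p c * sg \<nu> (lk X \<nu>))"
    by (subst poly_sum[of X]) (simp add: sum_distrib_left)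
  also have "\<dots> = (\<Sum>\<nu>\<in>ks X. sg (p + \<nu>) (c * lk X \<nu>))" by (simp add: mult_single)
  finally have "lk (sg p c * X) (p + \<nu>) = (\<Sum>\<nu>'\<in>ks X. (c * lk X \<nu>' when p + \<nu>' = p + \<nu>))"
    by (simp add: lookup_sum lookup_single)
  also have "\<dots> = (\<Sum>\<nu>'\<in>ks X. (if \<nu>' = \<nu> then c * lk X \<nu>' else 0))"
    by (intro sum.cong) (auto simp: when_def)
  also have "\<dots> = c * lk X \<nu>" by (auto simp: in_keys_iff)
  finally show ?thesis .
qed

lemma lookup_single_mult_not:
  assumes "\<not> (\<exists>\<nu>. k = (p::'b \<Rightarrow>\<^sub>0 nat) + \<nu>)"
  shows "lk (sg p c * X) k = 0"
proof -
  have "sg p c * X = (\<Sum>\<nu>\<in>ks X. sg p c * sg \<nu> (lk X \<nu>))"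
    by (subst poly_sum[of X]) (simp add: sum_distrib_left)
  also have "\<dots> = (\<Sum>\<nu>\<in>ks X. sg (p + \<nu>) (c * lk X \<nu>))" by (simp add: mult_single)
  finally show ?thesis using assms by (auto simp: lookup_sum lookup_single when_def intro!: sum.neutral)
qed

lemma single_mult_cancel:
  assumes "sg (p::'b \<Rightarrow>\<^sub>0 nat) (1::'a::comm_ring_1) * X = sg p 1 * Y" shows "X = Y"
proof (rule poly_mapping_eqI)
  fix \<nu> show "lk X \<nu> = lk Y \<nu>"
    using arg_cong[OF assms, of "\<lambda>h. lk h (p + \<nu>)"] by (simp add: lookup_single_mult_add)
qed

definition me :: "(var \<Rightarrow> 'a::comm_ring_1) \<Rightarrow> mon \<Rightarrow> 'a" where
  "me S \<mu> = (\<Prod>v\<in>ks \<mu>. S v ^ lk \<mu> v)"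

lemma me_alt: "finite K \<Longrightarrow> ks \<mu> \<subseteq> K \<Longrightarrow> me S \<mu> = (\<Prod>v\<in>K. S v ^ lk \<mu> v)"
  unfolding me_def by (rule prod.mono_neutral_left) (auto simp: in_keys_iff)

lemma me_add: "me S (a + b) = me S a * me S b"
proof -
  let ?K = "ks a \<union> ks b"
  have "me S (a + b) = (\<Prod>v\<in>?K. S v ^ lk (a+b) v)" by (rule me_alt) (auto simp: keys_add_nat)
  also have "\<dots> = (\<Prod>v\<in>?K. S v ^ lk a v) * (\<Prod>v\<in>?K. S v ^ lk b v)"
    by (simp add: lookup_add power_add prod.distrib)
  also have "\<dots> = me S a * me S b" by (subst (1 2) me_alt[of ?K]) auto
  finally show ?thesis .
qed

lemma eval_me: "eval S f = (\<Sum>\<mu>\<in>ks f. lk f \<mu> * me S \<mu>)"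
  unfolding eval_def me_def ..

lemma eval_alt: "finite K \<Longrightarrow> ks f \<subseteq> K \<Longrightarrow> eval S f = (\<Sum>\<mu>\<in>K. lk f \<mu> * me S \<mu>)"
  unfolding eval_me by (rule sum.mono_neutral_left) (auto simp: in_keys_iff)

lemma eval_add: "eval S (f + g) = eval S f + eval S g"
proof -
  let ?K = "ks f \<union> ks g"
  have "eval S (f + g) = (\<Sum>\<mu>\<in>?K. lk (f+g) \<mu> * me S \<mu>)" by (rule eval_alt) (use keys_add[of f g] in auto)
  also have "\<dots> = (\<Sum>\<mu>\<in>?K. lk f \<mu> * me S \<mu>) + (\<Sum>\<mu>\<in>?K. lk g \<mu> * me S \<mu>)"
    by (simp add: lookup_add distrib_right sum.distrib)
  also have "\<dots> = eval S f + eval S g" by (subst (1 2) eval_alt[of ?K]) auto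
  finally show ?thesis .
qed

lemma eval_zero[simp]: "eval S 0 = 0" by (simp add: eval_def)

lemma eval_sum: "eval S (sum F I) = (\<Sum>i\<in>I. eval S (F i))"
  by (induction I rule: infinite_finite_induct) (auto simp: eval_add)

lemma eval_single: "eval S (sg \<mu> c) = c * me S \<mu>"
  by (simp add: eval_me)

lemma eval_mult: "eval S (f * g) = eval S f * eval S g"
proof -
  have "f * g = (\<Sum>a\<in>ks f. \<Sum>b\<in>ks g. sg a (lk f a) * sg b (lk g b))"
    by (subst poly_sum[of f], subst poly_sum[of g]) (simp add: sum_distrib_left sum_distrib_right sum.swap[of _ "ks f"])
  also have "\<dots> = (\<Sum>a\<in>ks f. \<Sum>b\<in>ks g. sg (a + b) (lk f a * lk g b))" by (simp add: mult_single)
  finally have "eval S (f * g) = (\<Sum>a\<in>ks f. \<Sum>b\<in>ks g. (lk f a * me S a) * (lk g b * me S b))"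
    by (simp add: eval_sum eval_single me_add mult_ac)
  also have "\<dots> = eval S f * eval S g" by (simp add: eval_me sum_product)
  finally show ?thesis .
qed



lift_definition Epart :: "var set \<Rightarrow> 'a::zero mpoly \<Rightarrow> 'a mpoly" is
  "\<lambda>W f \<mu>. if Poly_Mapping.keys \<mu> = W then f \<mu> else 0"
proof -
  fix W and f :: "mon \<Rightarrow> 'a" assume "finite {x. f x \<noteq> 0}"
  then show "finite {\<mu>. (if Poly_Mapping.keys \<mu> = W then f \<mu> else 0) \<noteq> 0}"
    by (rule finite_subset[rotated]) auto
qed

lift_definition Cpart :: "var set \<Rightarrow> 'a::zero mpoly \<Rightarrow> 'a mpoly" is
  "\<lambda>W f \<nu>. if Poly_Mapping.keys \<nu> \<subseteq> W then f (\<nu> + mlmon W) else 0"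
proof -
  fix W and f :: "mon \<Rightarrow> 'a" assume fin: "finite {x. f x \<noteq> 0}"
  have "{\<nu>. (if Poly_Mapping.keys \<nu> \<subseteq> W then f (\<nu> + mlmon W) else 0) \<noteq> 0}
     \<subseteq> (\<lambda>\<mu>. \<mu> - mlmon W) ` {x. f x \<noteq> 0}"
  proof
    fix \<nu> assume "\<nu> \<in> {\<nu>. (if Poly_Mapping.keys \<nu> \<subseteq> W then f (\<nu> + mlmon W) else 0) \<noteq> 0}"
    then have "f (\<nu> + mlmon W) \<noteq> 0" by (auto split: if_splits)
    then show "\<nu> \<in> (\<lambda>\<mu>. \<mu> - mlmon W) ` {x. f x \<noteq> 0}"
      by (intro image_eqI[of _ _ "\<nu> + mlmon W"]) auto
  qed
  then show "finite {\<nu>. (if Poly_Mapping.keys \<nu> \<subseteq> W then f (\<nu> + mlmon W) else 0) \<noteq> 0}"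
    using fin by (meson finite_imageI finite_subset)
qed

lemma lookup_Epart: "lk (Epart W f) \<mu> = (if ks \<mu> = W then lk f \<mu> else 0)"
  by transfer simp

lemma lookup_Cpart: "lk (Cpart W f) \<nu> = (if ks \<nu> \<subseteq> W then lk f (\<nu> + mlmon W) else 0)"
  by transfer simp

lemma Epart_add: "Epart W (f + g) = Epart W f + Epart W g"
  by (rule poly_mapping_eqI) (simp add: lookup_Epart lookup_add)

lemma Epart_zero[simp]: "Epart W 0 = 0"
  by (rule poly_mapping_eqI) (simp add: lookup_Epart)

lemma Epart_sum: "Epart W (sum F I) = (\<Sum>i\<in>I. Epart W (F i))"
  by (induction I rule: infinite_finite_induct) (auto simp: Epart_add)

lemma Epart_single: "Epart W (sg a c) = (if ks a = W then sg a c else 0)"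
  by (rule poly_mapping_eqI) (auto simp: lookup_Epart lookup_single when_def)

lemma keys_vars: "\<nu> \<in> ks G \<Longrightarrow> ks \<nu> \<subseteq> vars G"
  unfolding vars_def by auto

lemma mon_decomp:
  assumes "finite V" "ks k = V" shows "k = mlmon V + (k - mlmon V)"
proof (rule poly_mapping_eqI)
  fix v show "lk k v = lk (mlmon V + (k - mlmon V)) v"
    using assms by (auto simp: lookup_add lookup_mlmon minus_poly_mapping.rep_eq in_keys_iff)
qed

lemma mon_Cpart: fixes h :: "'a::comm_ring_1 mpoly" assumes "finite V"
  shows "monpoly (mlmon V) * Cpart V h = Epart V h"
proof (rule poly_mapping_eqI)
  fix k
  show "lk (monpoly (mlmon V) * Cpart V h) k = lk (Epart V h) k"
  proof (cases "\<exists>\<nu>. k = mlmon V + \<nu>")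
    case True
    then obtain \<nu> where k: "k = mlmon V + \<nu>" by auto
    have "ks k = V \<union> ks \<nu>" by (simp add: k keys_add_nat keys_mlmon[OF assms])
    then show ?thesis unfolding k monpoly_def lookup_single_mult_add
      by (auto simp: lookup_Cpart lookup_Epart add.commute)
  next
    case False
    then have "ks k \<noteq> V" using mon_decomp[OF assms] by metis
    then show ?thesis unfolding monpoly_def using lookup_single_mult_not[OF False]
      by (simp add: lookup_Epart)
  qed
qed

lemma mdvd_iff: assumes "finite V" "ks \<mu> \<subseteq> V"
  shows "mdvd (mlmon V) \<mu> \<longleftrightarrow> ks \<mu> = V"
  using assms unfolding mdvd_def
  by (auto simp: lookup_mlmon in_keys_iff split: if_splits)

lemma pcm_entry_Cpart:
  assumes "finite P" "finite Q"
  shows "pcm_entry h P Q = Cpart (Inl ` P \<union> Inr ` Q) h"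
proof -
  define V where "V = Inl ` P \<union> Inr ` Q"
  have finV: "finite V" using assms V_def by auto
  define pq where "pq = mlmon V"
  have "(THE G. vars G \<subseteq> V \<and>
        (\<exists>R. h = monpoly pq * G + R \<and>
             (\<forall>\<mu>\<in>ks R. \<not> (mdvd pq \<mu> \<and> ks \<mu> \<subseteq> V)))) = Cpart V h"
  proof (rule the_equality)
    show "vars (Cpart V h) \<subseteq> V \<and>
        (\<exists>R. h = monpoly pq * Cpart V h + R \<and>
             (\<forall>\<mu>\<in>ks R. \<not> (mdvd pq \<mu> \<and> ks \<mu> \<subseteq> V)))"
    proof (intro conjI exI ballI)
      have "lk (Cpart V h) \<nu> \<noteq> 0 \<Longrightarrow> ks \<nu> \<subseteq> V" for \<nu>
        by (simp add: lookup_Cpart split: if_splits)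
      then show "vars (Cpart V h) \<subseteq> V"
        unfolding vars_def by (metis UN_least in_keys_iff)
      show "h = monpoly pq * Cpart V h + (h - monpoly pq * Cpart V h)" by simp
      fix \<mu> assume "\<mu> \<in> ks (h - monpoly pq * Cpart V h)"
      then have "ks \<mu> \<noteq> V" unfolding pq_def mon_Cpart[OF finV]
        by (auto simp: in_keys_iff lookup_Epart lookup_minus)
      then show "\<not> (mdvd pq \<mu> \<and> ks \<mu> \<subseteq> V)" using mdvd_iff[OF finV] pq_def by auto
    qed
  next
    fix G assume G: "vars G \<subseteq> V \<and>
        (\<exists>R. h = monpoly pq * G + R \<and>
             (\<forall>\<mu>\<in>ks R. \<not> (mdvd pq \<mu> \<and> ks \<mu> \<subseteq> V)))"
    then obtain R where hR: "h = monpoly pq * G + R" and R: "\<forall>\<mu>\<in>ks R. \<not> (mdvd pq \<mu> \<and> ks \<mu> \<subseteq> V)"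
      and vG: "vars G \<subseteq> V" by auto
    have ER: "Epart V R = 0"
    proof (rule poly_mapping_eqI)
      fix \<mu> show "lk (Epart V R) \<mu> = lk 0 \<mu>"
      proof (cases "ks \<mu> = V")
        case True
        have "lk R \<mu> = 0"
        proof (rule ccontr)
          assume "lk R \<mu> \<noteq> 0" then have "\<mu> \<in> ks R" by (simp add: in_keys_iff)
          with R mdvd_iff[OF finV, of \<mu>] True pq_def show False by auto
        qed
        then show ?thesis by (simp add: lookup_Epart)
      qed (simp add: lookup_Epart)
    qed
    have EG: "Epart V (monpoly pq * G) = monpoly pq * G"
    proof (rule poly_mapping_eqI)
      fix k
      show "lk (Epart V (monpoly pq * G)) k = lk (monpoly pq * G) k"
      proof (cases "\<exists>\<nu>. k = pq + \<nu>")
        case True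
        then obtain \<nu> where k: "k = pq + \<nu>" by auto
        have kk: "ks k = V \<union> ks \<nu>" by (simp add: k pq_def keys_add_nat keys_mlmon[OF finV])
        show ?thesis
        proof (cases "ks \<nu> \<subseteq> V")
          case True then have "ks k = V" using kk by auto
          then show ?thesis by (simp add: lookup_Epart)
        next
          case False
          then have "\<nu> \<notin> ks G" using keys_vars vG by blast
          then show ?thesis unfolding k monpoly_def lookup_single_mult_add
            by (simp add: lookup_Epart in_keys_iff lookup_single_mult_add)
        qed
      next
        case False
        then show ?thesis unfolding monpoly_def
          by (simp add: lookup_Epart lookup_single_mult_not[OF False])
      qed
    qed
    have "Epart V h = monpoly pq * G" using hR EG ER by (simp add: Epart_add)
    then have "monpoly pq * G = monpoly pq * Cpart V h" by (simp add: pq_def mon_Cpart[OF finV])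
    then show "G = Cpart V h" unfolding monpoly_def by (rule single_mult_cancel)
  qed
  then show ?thesis unfolding pcm_entry_def Let_def V_def pq_def .
qed



lemma sum_swap4:
  "(\<Sum>x\<in>X. \<Sum>y\<in>Y. \<Sum>a\<in>A. \<Sum>b\<in>B. F x y a b) = (\<Sum>a\<in>A. \<Sum>b\<in>B. \<Sum>x\<in>X. \<Sum>y\<in>Y. F x y a b)"
proof -
  have "(\<Sum>x\<in>X. \<Sum>y\<in>Y. \<Sum>a\<in>A. \<Sum>b\<in>B. F x y a b) = (\<Sum>x\<in>X. \<Sum>a\<in>A. \<Sum>y\<in>Y. \<Sum>b\<in>B. F x y a b)"
    by (rule sum.cong[OF refl], rule sum.swap)
  also have "\<dots> = (\<Sum>x\<in>X. \<Sum>a\<in>A. \<Sum>b\<in>B. \<Sum>y\<in>Y. F x y a b)"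
    by (rule sum.cong[OF refl], rule sum.cong[OF refl], rule sum.swap)
  also have "\<dots> = (\<Sum>a\<in>A. \<Sum>x\<in>X. \<Sum>b\<in>B. \<Sum>y\<in>Y. F x y a b)" by (rule sum.swap)
  also have "\<dots> = (\<Sum>a\<in>A. \<Sum>b\<in>B. \<Sum>x\<in>X. \<Sum>y\<in>Y. F x y a b)"
    by (rule sum.cong[OF refl], rule sum.swap)
  finally show ?thesis .
qed

lemma double_delta:
  assumes "finite V"
  shows "(\<Sum>W1\<in>Pow V. \<Sum>W2\<in>Pow V. if W1 \<union> W2 = V \<and> A = W1 \<and> B = W2 then t else 0)
     = (if A \<union> B = V then t else (0::'b::comm_monoid_add))"
proof -
  have "(\<Sum>W1\<in>Pow V. \<Sum>W2\<in>Pow V. if W1 \<union> W2 = V \<and> A = W1 \<and> B = W2 then t else 0)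
      = (\<Sum>W1\<in>Pow V. if W1 = A then (\<Sum>W2\<in>Pow V. if W2 = B then (if A \<union> B = V then t else 0) else 0) else 0)"
  proof (rule sum.cong[OF refl])
    fix W1 show "(\<Sum>W2\<in>Pow V. if W1 \<union> W2 = V \<and> A = W1 \<and> B = W2 then t else 0) =
      (if W1 = A then (\<Sum>W2\<in>Pow V. if W2 = B then (if A \<union> B = V then t else 0) else 0) else 0)"
    proof (cases "W1 = A")
      case True
      have "(\<Sum>W2\<in>Pow V. if W1 \<union> W2 = V \<and> A = W1 \<and> B = W2 then t else 0) =
        (\<Sum>W2\<in>Pow V. if W2 = B then (if A \<union> B = V then t else 0) else 0)"
        by (rule sum.cong[OF refl]) (auto simp: True)
      then show ?thesis by (simp only: True simp_thms if_True)
    qed (auto intro!: sum.neutral)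
  qed
  also have "\<dots> = (\<Sum>W1\<in>Pow V. if W1 = A then (if B \<in> Pow V then (if A \<union> B = V then t else 0) else 0) else 0)"
    using sum.delta[of "Pow V" B "\<lambda>_. (if A \<union> B = V then t else 0)"] assms by simp
  also have "\<dots> = (if A \<in> Pow V then (if B \<in> Pow V then (if A \<union> B = V then t else 0) else 0) else 0)"
    using sum.delta[of "Pow V" A "\<lambda>_. (if B \<in> Pow V then (if A \<union> B = V then t else 0) else 0)"] assms by simp
  also have "\<dots> = (if A \<union> B = V then t else 0)" by auto
  finally show ?thesis .
qed

lemma Epart_sg_sum: "Epart W f = (\<Sum>a\<in>ks f. if ks a = W then sg a (lk f a) else 0)"
  using arg_cong[OF poly_sum[of f], of "Epart W"] by (simp add: Epart_sum Epart_single)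

lemma fg_sum: "f * g = (\<Sum>a\<in>ks f. \<Sum>b\<in>ks g. sg (a + b) (lk f a * lk g b))"
proof -
  have "f * g = (\<Sum>a\<in>ks f. \<Sum>b\<in>ks g. sg a (lk f a) * sg b (lk g b))"
    by (subst poly_sum[of f], subst poly_sum[of g]) (simp add: sum_distrib_left sum_distrib_right sum.swap[of _ "ks f"])
  also have "\<dots> = (\<Sum>a\<in>ks f. \<Sum>b\<in>ks g. sg (a + b) (lk f a * lk g b))" by (simp add: mult_single)
  finally show ?thesis .
qed

lemma Epart_mult:
  fixes f g :: "'a::comm_ring_1 mpoly"
  assumes "finite V"
  shows "Epart V (f * g) = (\<Sum>W1\<in>Pow V. \<Sum>W2\<in>Pow V. if W1 \<union> W2 = V then Epart W1 f * Epart W2 g else 0)"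
proof -
  define T where "T a b = sg (a + b) (lk f a * lk g b)" for a b
  have L: "Epart V (f * g) = (\<Sum>a\<in>ks f. \<Sum>b\<in>ks g. if ks a \<union> ks b = V then T a b else 0)"
    unfolding fg_sum T_def by (simp add: Epart_sum Epart_single keys_add_nat)
  have P: "Epart W1 f * Epart W2 g = (\<Sum>a\<in>ks f. \<Sum>b\<in>ks g. if W1 \<union> W2 = V \<and> ks a = W1 \<and> ks b = W2 then T a b else 0)"
    if "W1 \<union> W2 = V" for W1 W2
    unfolding Epart_sg_sum sum_product T_def using that
    by (intro sum.cong refl) (auto simp: mult_single)
  have "(\<Sum>W1\<in>Pow V. \<Sum>W2\<in>Pow V. if W1 \<union> W2 = V then Epart W1 f * Epart W2 g else 0)
    = (\<Sum>W1\<in>Pow V. \<Sum>W2\<in>Pow V. \<Sum>a\<in>ks f. \<Sum>b\<in>ks g. if W1 \<union> W2 = V \<and> ks a = W1 \<and> ks b = W2 then T a b else 0)"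
    using P by (intro sum.cong refl) auto
  also have "\<dots> = (\<Sum>a\<in>ks f. \<Sum>b\<in>ks g. \<Sum>W1\<in>Pow V. \<Sum>W2\<in>Pow V. if W1 \<union> W2 = V \<and> ks a = W1 \<and> ks b = W2 then T a b else 0)"
    by (rule sum_swap4)
  also have "\<dots> = (\<Sum>a\<in>ks f. \<Sum>b\<in>ks g. if ks a \<union> ks b = V then T a b else 0)"
    by (intro sum.cong refl) (rule double_delta[OF assms])
  finally show ?thesis using L by simp
qed

lemma Cpart_mult:
  fixes f g :: "'a::comm_ring_1 mpoly"
  assumes "finite V"
  shows "Cpart V (f * g) = (\<Sum>W1\<in>Pow V. \<Sum>W2\<in>Pow V. if W1 \<union> W2 = V
       then monpoly (mlmon (W1 \<inter> W2)) * (Cpart W1 f * Cpart W2 g) else 0)"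
proof -
  have fin: "W \<in> Pow V \<Longrightarrow> finite W" for W using assms finite_subset by auto
  have "monpoly (mlmon V) * Cpart V (f * g) = Epart V (f * g)" by (rule mon_Cpart[OF assms])
  also have "\<dots> = (\<Sum>W1\<in>Pow V. \<Sum>W2\<in>Pow V. if W1 \<union> W2 = V then
       (monpoly (mlmon W1) * Cpart W1 f) * (monpoly (mlmon W2) * Cpart W2 g) else 0)"
    unfolding Epart_mult[OF assms] using fin by (intro sum.cong refl) (simp add: mon_Cpart)
  also have "\<dots> = (\<Sum>W1\<in>Pow V. \<Sum>W2\<in>Pow V. monpoly (mlmon V) * (if W1 \<union> W2 = V
       then monpoly (mlmon (W1 \<inter> W2)) * (Cpart W1 f * Cpart W2 g) else 0))"
  proof (intro sum.cong refl)
    fix W1 W2 assume "W1 \<in> Pow V" "W2 \<in> Pow V"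
    then have "mlmon W1 + mlmon W2 = mlmon (W1 \<union> W2) + mlmon (W1 \<inter> W2)"
      using fin by (intro mlmon_union) auto
    then show "(if W1 \<union> W2 = V then
       (monpoly (mlmon W1) * Cpart W1 f) * (monpoly (mlmon W2) * Cpart W2 g) else 0) =
       monpoly (mlmon V) * (if W1 \<union> W2 = V
       then monpoly (mlmon (W1 \<inter> W2)) * (Cpart W1 f * Cpart W2 g) else 0)"
    proof -
      assume e: "mlmon W1 + mlmon W2 = mlmon (W1 \<union> W2) + mlmon (W1 \<inter> W2)"
      have "monpoly (mlmon W1) * monpoly (mlmon W2) = (monpoly (mlmon (W1 \<union> W2)) * monpoly (mlmon (W1 \<inter> W2)) :: 'a mpoly)"
        unfolding monpoly_def mult_single e by simp
      moreover have "(monpoly (mlmon W1) * Cpart W1 f) * (monpoly (mlmon W2) * Cpart W2 g)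
          = (monpoly (mlmon W1) * monpoly (mlmon W2)) * (Cpart W1 f * Cpart W2 g :: 'a mpoly)"
        by (simp add: mult_ac)
      moreover have "monpoly (mlmon (W1 \<union> W2)) * monpoly (mlmon (W1 \<inter> W2)) * (Cpart W1 f * Cpart W2 g)
          = monpoly (mlmon (W1 \<union> W2)) * (monpoly (mlmon (W1 \<inter> W2)) * (Cpart W1 f * Cpart W2 g :: 'a mpoly))"
        by (simp add: mult.assoc)
      ultimately show ?thesis by auto
    qed
  qed
  also have "\<dots> = monpoly (mlmon V) * (\<Sum>W1\<in>Pow V. \<Sum>W2\<in>Pow V. if W1 \<union> W2 = V
       then monpoly (mlmon (W1 \<inter> W2)) * (Cpart W1 f * Cpart W2 g) else 0)"
    by (simp add: sum_distrib_left)
  finally show ?thesis unfolding monpoly_def by (rule single_mult_cancel)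
qed



lemma Cpart_vanish:
  assumes "vars g \<subseteq> X" "\<not> W \<subseteq> X" "finite W"
  shows "Cpart W g = 0"
proof (rule poly_mapping_eqI)
  fix \<nu>
  obtain v where v: "v \<in> W" "v \<notin> X" using assms by auto
  have "lk g (\<nu> + mlmon W) = 0"
  proof (rule ccontr)
    assume "lk g (\<nu> + mlmon W) \<noteq> 0"
    then have "ks (\<nu> + mlmon W) \<subseteq> X" using keys_vars assms(1) by (metis in_keys_iff subset_trans)
    moreover have "v \<in> ks (\<nu> + mlmon W)" using v by (simp add: keys_add_nat keys_mlmon[OF assms(3)])
    ultimately show False using v by auto
  qed
  then show "lk (Cpart W g) \<nu> = lk 0 \<nu>" by (simp add: lookup_Cpart)
qed

lemma sum2_restrict:
  assumes "finite U1" "finite U2" "S1 \<subseteq> U1" "S2 \<subseteq> U2"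
    and "\<And>x y. x \<in> U1 \<Longrightarrow> y \<in> U2 \<Longrightarrow> x \<notin> S1 \<or> y \<notin> S2 \<Longrightarrow> F x y = 0"
  shows "(\<Sum>x\<in>S1. \<Sum>y\<in>S2. F x y) = (\<Sum>x\<in>U1. \<Sum>y\<in>U2. F x y)"
proof -
  have "(\<Sum>x\<in>S1. \<Sum>y\<in>S2. F x y) = (\<Sum>x\<in>S1. \<Sum>y\<in>U2. F x y)"
    using assms by (intro sum.cong refl sum.mono_neutral_left) auto
  also have "\<dots> = (\<Sum>x\<in>U1. \<Sum>y\<in>U2. F x y)"
    using assms by (intro sum.mono_neutral_left) (auto intro!: sum.neutral)
  finally show ?thesis .
qed

definition apoly :: "(nat \<Rightarrow> var) \<Rightarrow> 'a::comm_ring_1 mpoly \<Rightarrow> nat set \<Rightarrow> nat set \<Rightarrow> nat set \<Rightarrow> 'a mpoly" where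
  "apoly L g M P P1 = (\<Sum>P2\<in>Pow M. if P1 \<union> P2 = P then monpoly (mlmon (L ` (P1 \<inter> P2))) * Cpart (L ` P2) g else 0)"

lemma Cpart_mult_side:
  fixes f g :: "'a::comm_ring_1 mpoly" and L R :: "nat \<Rightarrow> var"
  assumes injL: "inj L" and injR: "inj R" and disj: "\<And>x y. L x \<noteq> R y"
    and vg: "vars g \<subseteq> range L" and finM: "finite M" and PM: "P \<subseteq> M" and finQ: "finite Q"
  shows "Cpart (L ` P \<union> R ` Q) (f * g) = (\<Sum>P1\<in>Pow M. apoly L g M P P1 * Cpart (L ` P1 \<union> R ` Q) f)"
proof -
  define V where "V = L ` P \<union> R ` Q"
  have finP: "finite P" using finM PM finite_subset by auto
  have finV: "finite V" using V_def finP finQ by auto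
  define F where "F W1 W2 = (if W1 \<union> W2 = V
       then monpoly (mlmon (W1 \<inter> W2)) * (Cpart W1 f * Cpart W2 g) else 0)" for W1 W2
  define h1 where "h1 P1 = L ` P1 \<union> R ` Q" for P1
  have injh1: "inj_on h1 (Pow M)"
  proof (rule inj_onI)
    fix X Y assume "h1 X = h1 Y"
    then have "L -` h1 X = L -` h1 Y" by simp
    moreover have "L -` h1 Z = Z" for Z unfolding h1_def using injL disj by (auto simp: inj_eq)
    ultimately show "X = Y" by simp
  qed
  have injL2: "inj_on ((`) L) (Pow M)" using injL by (meson inj_image_eq_iff inj_onI)
  have cond: "h1 P1 \<union> L ` P2 = V \<longleftrightarrow> P1 \<union> P2 = P" for P1 P2
  proof
    assume "h1 P1 \<union> L ` P2 = V"
    then have "L -` (h1 P1 \<union> L ` P2) = L -` V" by simp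
    moreover have "L -` (h1 P1 \<union> L ` P2) = P1 \<union> P2" unfolding h1_def using injL disj by (auto simp: inj_eq)
    moreover have "L -` V = P" unfolding V_def using injL disj by (auto simp: inj_eq)
    ultimately show "P1 \<union> P2 = P" by simp
  qed (auto simp: h1_def V_def)
  have inter: "h1 P1 \<inter> L ` P2 = L ` (P1 \<inter> P2)" for P1 P2
    unfolding h1_def using injL disj by (auto simp: inj_eq)
  have "(\<Sum>P1\<in>Pow M. apoly L g M P P1 * Cpart (h1 P1) f)
      = (\<Sum>P1\<in>Pow M. \<Sum>P2\<in>Pow M. F (h1 P1) (L ` P2))"
    unfolding apoly_def F_def sum_distrib_right
    by (intro sum.cong refl) (auto simp: cond inter mult_ac)
  also have "\<dots> = (\<Sum>W1\<in>h1 ` Pow M. \<Sum>W2\<in>(`) L ` Pow M. F W1 W2)"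
    by (simp add: sum.reindex[OF injh1] sum.reindex[OF injL2])
  also have "\<dots> = (\<Sum>W1\<in>h1 ` Pow M \<union> Pow V. \<Sum>W2\<in>(`) L ` Pow M \<union> Pow V. F W1 W2)"
  proof (rule sum2_restrict)
    fix W1 W2
    assume W: "W1 \<in> h1 ` Pow M \<union> Pow V" "W2 \<in> (`) L ` Pow M \<union> Pow V"
      "W1 \<notin> h1 ` Pow M \<or> W2 \<notin> (`) L ` Pow M"
    show "F W1 W2 = 0"
    proof (rule ccontr)
      assume nz: "F W1 W2 \<noteq> 0"
      then have U: "W1 \<union> W2 = V" unfolding F_def by (auto split: if_splits)
      have W2L: "W2 \<subseteq> range L"
      proof (rule ccontr)
        assume "\<not> W2 \<subseteq> range L"
        moreover have "finite W2" using U finV finite_subset by blast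
        ultimately have "Cpart W2 g = 0" using Cpart_vanish vg by blast
        then have "F W1 W2 = 0" unfolding F_def by simp
        then show False using nz by simp
      qed
      have pre: "L -` W \<subseteq> M" if "W \<subseteq> V" for W
      proof
        fix x assume "x \<in> L -` W"
        then have "L x \<in> L ` P \<union> R ` Q" using that V_def by auto
        then have "x \<in> P" using injL disj by (auto simp: inj_eq)
        then show "x \<in> M" using PM by auto
      qed
      have "W2 = L ` (L -` W2)" using W2L by auto
      moreover have "L -` W2 \<subseteq> M" using U pre by auto
      ultimately have W2in: "W2 \<in> (`) L ` Pow M" by (intro image_eqI[of _ _ "L -` W2"]) auto
      then obtain P2 where P2: "W2 = L ` P2" by auto
      have RQ: "R ` Q \<subseteq> W1"
      proof
        fix w assume "w \<in> R ` Q"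
        then have "w \<in> W1 \<union> L ` P2" "w \<notin> L ` P2" using U V_def disj by (auto simp: P2) (metis disj)
        then show "w \<in> W1" by auto
      qed
      have "W1 \<subseteq> L ` (L -` W1) \<union> R ` Q"
      proof
        fix w assume "w \<in> W1"
        then have "w \<in> L ` P \<union> R ` Q" using U V_def by auto
        then show "w \<in> L ` (L -` W1) \<union> R ` Q" using \<open>w \<in> W1\<close> by auto
      qed
      then have "W1 = h1 (L -` W1)" using RQ unfolding h1_def by auto
      moreover have "L -` W1 \<subseteq> M" using U pre by auto
      ultimately have "W1 \<in> h1 ` Pow M" by (intro image_eqI[of _ _ "L -` W1"]) auto
      then show False using W W2in by auto
    qed
  qed (use finM finV in auto)
  also have "\<dots> = (\<Sum>W1\<in>Pow V. \<Sum>W2\<in>Pow V. F W1 W2)"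
    by (rule sym, rule sum2_restrict) (use finM finV in \<open>auto simp: F_def\<close>)
  also have "\<dots> = Cpart V (f * g)" unfolding F_def by (rule Cpart_mult[OF finV, symmetric])
  finally show ?thesis unfolding V_def h1_def by simp
qed



lemma idx_set_bij: "bij_betw (idx_set m) {..<2^m} (Pow {..<m})"
proof -
  have inj: "inj_on (idx_set m) {..<2^m}"
  proof (rule inj_onI)
    fix i j :: nat assume i: "i \<in> {..<2^m}" and j: "j \<in> {..<2^m}" and e: "idx_set m i = idx_set m j"
    have ti: "take_bit m i = i" using i by (simp add: take_bit_nat_eq_self_iff)
    have tj: "take_bit m j = j" using j by (simp add: take_bit_nat_eq_self_iff)
    have "bit (take_bit m i) n = bit (take_bit m j) n" for n
      using e unfolding idx_set_def by (auto simp: bit_take_bit_iff set_eq_iff)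
    then show "i = j" using ti tj by (metis bit_eq_iff)
  qed
  have sub: "idx_set m ` {..<2^m} \<subseteq> Pow {..<m}" unfolding idx_set_def by auto
  have "card (idx_set m ` {..<2^m}) = card (Pow {..<m})"
    using card_image[OF inj] by (simp add: card_Pow)
  then have "idx_set m ` {..<2^m} = Pow {..<m}"
    using sub by (intro card_subset_eq) auto
  then show ?thesis using inj unfolding bij_betw_def by auto
qed

lemma idx_set_fin: "finite (idx_set m i)" "idx_set m i \<subseteq> {..<m}"
  unfolding idx_set_def by auto

lemma pcm_eval_carrier: "pcm_eval m f S \<in> carrier_mat (2^m) (2^m)"
  unfolding pcm_eval_def by auto

lemma matY:
  fixes f g :: "'a::field mpoly"
  assumes vg: "vars g \<subseteq> range Inl"
  shows "pcm_eval m (f * g) S = mat (2^m) (2^m) (\<lambda>(i, k). eval S (apoly Inl g {..<m} (idx_set m i) (idx_set m k)))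
     * pcm_eval m f S" (is "_ = ?A * ?B")
proof (rule eq_matI)
  fix i j assume i: "i < dim_row (?A * ?B)" and j: "j < dim_col (?A * ?B)"
  then have i': "i < 2^m" and j': "j < 2^m" by (auto simp: pcm_eval_def)
  let ?P = "idx_set m i" and ?Q = "idx_set m j"
  have "(?A * ?B) $$ (i, j) = (\<Sum>k\<in>{0..<2^m}. ?A $$ (i, k) * ?B $$ (k, j))"
    using i' j' by (simp add: scalar_prod_def pcm_eval_def)
  also have "\<dots> = (\<Sum>k\<in>{..<2^m}. eval S (apoly Inl g {..<m} ?P (idx_set m k) * Cpart (Inl ` idx_set m k \<union> Inr ` ?Q) f))"
    using i' j' by (intro sum.cong) (auto simp: pcm_eval_def eval_mult pcm_entry_Cpart idx_set_fin)
  also have "\<dots> = (\<Sum>P1\<in>Pow {..<m}. eval S (apoly Inl g {..<m} ?P P1 * Cpart (Inl ` P1 \<union> Inr ` ?Q) f))"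
    by (rule sum.reindex_bij_betw[OF idx_set_bij])
  also have "\<dots> = eval S (Cpart (Inl ` ?P \<union> Inr ` ?Q) (f * g))"
    by (subst Cpart_mult_side[where L=Inl and R=Inr and M="{..<m}"])
       (use vg idx_set_fin in \<open>auto simp: eval_sum\<close>)
  also have "\<dots> = pcm_eval m (f * g) S $$ (i, j)"
    using i' j' by (simp add: pcm_eval_def pcm_entry_Cpart idx_set_fin)
  finally show "pcm_eval m (f * g) S $$ (i, j) = (?A * ?B) $$ (i, j)" by simp
qed (auto simp: pcm_eval_def)

lemma matZ:
  fixes f g :: "'a::field mpoly"
  assumes vg: "vars g \<subseteq> range Inr"
  shows "pcm_eval m (f * g) S = pcm_eval m f S *
     mat (2^m) (2^m) (\<lambda>(k, j). eval S (apoly Inr g {..<m} (idx_set m j) (idx_set m k)))"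
     (is "_ = ?B * ?A")
proof (rule eq_matI)
  fix i j assume i: "i < dim_row (?B * ?A)" and j: "j < dim_col (?B * ?A)"
  then have i': "i < 2^m" and j': "j < 2^m" by (auto simp: pcm_eval_def)
  let ?P = "idx_set m i" and ?Q = "idx_set m j"
  have un: "Inl ` ?P \<union> Inr ` Q1 = Inr ` Q1 \<union> Inl ` ?P" for Q1 by auto
  have "(?B * ?A) $$ (i, j) = (\<Sum>k\<in>{0..<2^m}. ?B $$ (i, k) * ?A $$ (k, j))"
    using i' j' by (simp add: scalar_prod_def pcm_eval_def)
  also have "\<dots> = (\<Sum>k\<in>{..<2^m}. eval S (apoly Inr g {..<m} ?Q (idx_set m k) * Cpart (Inr ` idx_set m k \<union> Inl ` ?P) f))"
    using i' j' by (intro sum.cong) (auto simp: pcm_eval_def eval_mult pcm_entry_Cpart idx_set_fin un mult.commute)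
  also have "\<dots> = (\<Sum>Q1\<in>Pow {..<m}. eval S (apoly Inr g {..<m} ?Q Q1 * Cpart (Inr ` Q1 \<union> Inl ` ?P) f))"
    by (rule sum.reindex_bij_betw[OF idx_set_bij])
  also have "\<dots> = eval S (Cpart (Inr ` ?Q \<union> Inl ` ?P) (f * g))"
    by (subst Cpart_mult_side[where L=Inr and R=Inl and M="{..<m}"])
       (use vg idx_set_fin in \<open>auto simp: eval_sum\<close>)
  also have "\<dots> = pcm_eval m (f * g) S $$ (i, j)"
    using i' j' by (simp add: pcm_eval_def pcm_entry_Cpart idx_set_fin un)
  finally show "pcm_eval m (f * g) S $$ (i, j) = (?B * ?A) $$ (i, j)" by simp
qed (auto simp: pcm_eval_def)

theorem proposition4:
  fixes m :: nat and f g :: "'a::field mpoly"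
  assumes "vars f \<subseteq> Yvars m \<union> Zvars m"
    and "vars g \<subseteq> Yvars m \<or> vars g \<subseteq> Zvars m"
  shows "maxrank m (f * g) \<le> maxrank m f"
proof -
  let ?r = "\<lambda>h S. vec_space.rank (2^m) (pcm_eval m h S)"
  have fin: "finite (range (?r h))" for h :: "'a mpoly"
  proof (rule finite_subset)
    show "range (?r h) \<subseteq> {..2^m}"
      using vec_space.rank_le_nc[OF pcm_eval_carrier] by auto
  qed auto
  have le: "?r (f * g) S \<le> ?r f S" for S
  proof (cases "vars g \<subseteq> Yvars m")
    case True
    then have "vars g \<subseteq> range Inl" unfolding Yvars_def by auto
    then show ?thesis
      by (subst matY) (auto intro!: vec_space.rank_mult_le_right pcm_eval_carrier)
  next
    case False
    then have "vars g \<subseteq> range Inr" using assms(2) unfolding Zvars_def by auto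
    then show ?thesis
      by (subst matZ) (auto intro!: vec_space.rank_mult_le_left pcm_eval_carrier)
  qed
  show ?thesis unfolding maxrank_def
  proof (rule Max.boundedI)
    show "finite (range (?r (f * g)))" by (rule fin)
    show "range (?r (f * g)) \<noteq> {}" by auto
    fix x assume "x \<in> range (?r (f * g))"
    then obtain S where "x = ?r (f * g) S" by auto
    also have "\<dots> \<le> ?r f S" by (rule le)
    also have "\<dots> \<le> Max (range (?r f))" by (rule Max_ge[OF fin]) auto
    finally show "x \<le> Max (range (?r f))" .
  qed
qed


end
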